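(* Let $G$ be a finitely generated group. If $IP_{Rat}(G\rtimes\mathbb{Z})$ is decidable, then $GBrP_{Rat}(G)$ is decidable.
   Context: For $\phi\in\mathrm{Aut}(G)$, $G\rtimes_\phi\mathbb{Z}$ is the group generated by $G$ and $t$ with $t^{-1}at=\phi(a)$ for $a\in G$. A subset of a finitely generated group is rational if it is the image of a rational (regular) language over the generators and their inverses (given by a finite automaton). $IP_{Rat}(G\rtimes\mathbb{Z})$: given $\phi\in\mathrm{Aut}(G)$ and two rational subsets of $G\rtimes_\phi\mathbb{Z}$, decide whether they intersect. $GBrP_{Rat}(G)$: given a rational subset $K\subseteq G$, $\phi\in\mathrm{Aut}(G)$ and $x\in G$, decide whether there exists $k$ with $\phi^k(x)\in K$. *)

theory Defs
  imports "HOL-Algebra.Generated_Groups" "HOL-Library.Nat_Bijection"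
begin

datatype recf = Zero | Succ | Proj nat | Comp recf "recf list" | Prim recf recf | Mini recf

inductive rf_eval :: "recf \<Rightarrow> nat list \<Rightarrow> nat \<Rightarrow> bool" where
  zero: "rf_eval Zero xs 0"
| succ: "rf_eval Succ (x # xs) (Suc x)"
| proj: "i < length xs \<Longrightarrow> rf_eval (Proj i) xs (xs ! i)"
| comp: "length ys = length gs \<Longrightarrow> (\<forall>i < length gs. rf_eval (gs ! i) xs (ys ! i))
          \<Longrightarrow> rf_eval f ys z \<Longrightarrow> rf_eval (Comp f gs) xs z"
| prim0: "rf_eval g xs y \<Longrightarrow> rf_eval (Prim g h) (0 # xs) y"
| primS: "rf_eval (Prim g h) (n # xs) y \<Longrightarrow> rf_eval h (y # n # xs) z
          \<Longrightarrow> rf_eval (Prim g h) (Suc n # xs) z"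
| mini: "rf_eval f (n # xs) 0 \<Longrightarrow> (\<forall>m < n. \<exists>y. rf_eval f (m # xs) (Suc y))
          \<Longrightarrow> rf_eval (Mini f) xs n"

text \<open>A letter over a generating list of length n is a code c < 2n:
  generator number c div 2, inverted iff c is odd.\<close>

definition word_ok :: "nat \<Rightarrow> nat list \<Rightarrow> bool" where
  "word_ok n w \<longleftrightarrow> (\<forall>c \<in> set w. c < 2 * n)"

type_synonym nfa = "(nat \<times> nat \<times> nat) list \<times> nat \<times> nat list"

fun nfa_run :: "(nat \<times> nat \<times> nat) list \<Rightarrow> nat \<Rightarrow> nat list \<Rightarrow> nat \<Rightarrow> bool" where
  "nfa_run ts p [] q \<longleftrightarrow> p = q"
| "nfa_run ts p (a # w) q \<longleftrightarrow> (\<exists>p'. (p, a, p') \<in> set ts \<and> nfa_run ts p' w q)"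

fun nfa_accepts :: "nfa \<Rightarrow> nat list \<Rightarrow> bool" where
  "nfa_accepts (ts, q0, fs) w \<longleftrightarrow> (\<exists>q \<in> set fs. nfa_run ts q0 w q)"

fun nfa_ok :: "nat \<Rightarrow> nfa \<Rightarrow> bool" where
  "nfa_ok n (ts, q0, fs) \<longleftrightarrow> (\<forall>(p, a, q) \<in> set ts. a < 2 * n)"

fun enc_nfa :: "nfa \<Rightarrow> nat" where
  "enc_nfa (ts, q0, fs) =
     prod_encode (list_encode (map (\<lambda>(p, a, q). prod_encode (p, prod_encode (a, q))) ts),
                  prod_encode (q0, list_encode fs))"

definition enc_aut :: "nat list list \<Rightarrow> nat" where
  "enc_aut ws = list_encode (map list_encode ws)"

definition gen_letter :: "('a, 'b) monoid_scheme \<Rightarrow> 'a list \<Rightarrow> nat \<Rightarrow> 'a" where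
  "gen_letter G gens c =
     (if odd c then inv\<^bsub>G\<^esub> (gens ! (c div 2)) else gens ! (c div 2))"

definition eval_word :: "('a, 'b) monoid_scheme \<Rightarrow> 'a list \<Rightarrow> nat list \<Rightarrow> 'a" where
  "eval_word G gens w = foldr (\<lambda>c acc. gen_letter G gens c \<otimes>\<^bsub>G\<^esub> acc) w \<one>\<^bsub>G\<^esub>"

definition rat_set :: "('a, 'b) monoid_scheme \<Rightarrow> 'a list \<Rightarrow> nfa \<Rightarrow> 'a set" where
  "rat_set G gens A = eval_word G gens ` {w. nfa_accepts A w}"

definition aut_pow :: "('a, 'b) monoid_scheme \<Rightarrow> ('a \<Rightarrow> 'a) \<Rightarrow> int \<Rightarrow> 'a \<Rightarrow> 'a" where
  "aut_pow G \<phi> k = (if 0 \<le> k then \<phi> ^^ nat k else inv_into (carrier G) \<phi> ^^ nat (- k))"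

text \<open>Elements of G \<rtimes>_\<phi> Z in normal form g t^m, represented as (g, m).
  Since t^{-1} a t = \<phi>(a), we have t^m h = \<phi>^{-m}(h) t^m.\<close>
definition sd_mult :: "('a, 'b) monoid_scheme \<Rightarrow> ('a \<Rightarrow> 'a) \<Rightarrow> 'a \<times> int \<Rightarrow> 'a \<times> int \<Rightarrow> 'a \<times> int" where
  "sd_mult G \<phi> x y = (fst x \<otimes>\<^bsub>G\<^esub> aut_pow G \<phi> (- snd x) (fst y), snd x + snd y)"

text \<open>Generators of G \<rtimes> Z: those of G (numbers < length gens) and t (number length gens).\<close>
definition sd_letter :: "('a, 'b) monoid_scheme \<Rightarrow> 'a list \<Rightarrow> nat \<Rightarrow> 'a \<times> int" where
  "sd_letter G gens c =
     (if c div 2 = length gens then (\<one>\<^bsub>G\<^esub>, if odd c then -1 else 1)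
      else (gen_letter G gens c, 0))"

definition sd_eval :: "('a, 'b) monoid_scheme \<Rightarrow> ('a \<Rightarrow> 'a) \<Rightarrow> 'a list \<Rightarrow> nat list \<Rightarrow> 'a \<times> int" where
  "sd_eval G \<phi> gens w = foldr (\<lambda>c acc. sd_mult G \<phi> (sd_letter G gens c) acc) w (\<one>\<^bsub>G\<^esub>, 0)"

definition sd_rat_set :: "('a, 'b) monoid_scheme \<Rightarrow> ('a \<Rightarrow> 'a) \<Rightarrow> 'a list \<Rightarrow> nfa \<Rightarrow> ('a \<times> int) set" where
  "sd_rat_set G \<phi> gens A = sd_eval G \<phi> gens ` {w. nfa_accepts A w}"

definition represents :: "('a, 'b) monoid_scheme \<Rightarrow> 'a list \<Rightarrow> nat list list \<Rightarrow> ('a \<Rightarrow> 'a) \<Rightarrow> bool" where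
  "represents G gens ws \<phi> \<longleftrightarrow> \<phi> \<in> iso G G \<and> length ws = length gens \<and>
     (\<forall>w \<in> set ws. word_ok (length gens) w) \<and>
     (\<forall>i < length gens. \<phi> (gens ! i) = eval_word G gens (ws ! i))"

definition IP_Rat_sd_decidable :: "('a, 'b) monoid_scheme \<Rightarrow> 'a list \<Rightarrow> bool" where
  "IP_Rat_sd_decidable G gens \<longleftrightarrow> (\<exists>M. \<forall>\<phi> ws A B.
     represents G gens ws \<phi> \<and> nfa_ok (Suc (length gens)) A \<and> nfa_ok (Suc (length gens)) B \<longrightarrow>
     rf_eval M [prod_encode (enc_aut ws, prod_encode (enc_nfa A, enc_nfa B))]
       (if sd_rat_set G \<phi> gens A \<inter> sd_rat_set G \<phi> gens B \<noteq> {} then 1 else 0))"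

definition GBrP_Rat_decidable :: "('a, 'b) monoid_scheme \<Rightarrow> 'a list \<Rightarrow> bool" where
  "GBrP_Rat_decidable G gens \<longleftrightarrow> (\<exists>M. \<forall>K \<phi> ws x.
     nfa_ok (length gens) K \<and> represents G gens ws \<phi> \<and> word_ok (length gens) x \<longrightarrow>
     rf_eval M [prod_encode (enc_nfa K, prod_encode (enc_aut ws, list_encode x))]
       (if \<exists>k::nat. (\<phi> ^^ k) (eval_word G gens x) \<in> rat_set G gens K then 1 else 0))"

end

theory Submission
  imports Defs
begin


lemma c1: "rf_eval g xs a \<Longrightarrow> rf_eval f [a] z \<Longrightarrow> rf_eval (Comp f [g]) xs z"
  by (rule rf_eval.comp[where ys="[a]"]) auto
lemma c2: "rf_eval g1 xs a \<Longrightarrow> rf_eval g2 xs b \<Longrightarrow> rf_eval f [a,b] z \<Longrightarrow> rf_eval (Comp f [g1,g2]) xs z"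
  by (rule rf_eval.comp[where ys="[a,b]"]) (auto simp: less_Suc_eq nth_Cons')
lemma c3: "rf_eval g1 xs a \<Longrightarrow> rf_eval g2 xs b \<Longrightarrow> rf_eval g3 xs c \<Longrightarrow> rf_eval f [a,b,c] z \<Longrightarrow> rf_eval (Comp f [g1,g2,g3]) xs z"
  by (rule rf_eval.comp[where ys="[a,b,c]"]) (auto simp: less_Suc_eq nth_Cons')

lemma pjI: "i < length xs \<Longrightarrow> a = xs ! i \<Longrightarrow> rf_eval (Proj i) xs a"
  using rf_eval.proj by simp
lemma pj0: "rf_eval (Proj 0) (a # xs) a" by (rule pjI) auto
lemma pj1: "rf_eval (Proj 1) (a # b # xs) b" by (rule pjI) auto
lemma pj2: "rf_eval (Proj 2) (a # b # c # xs) c" by (rule pjI) auto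

lemma ev_eq: "rf_eval M xs a \<Longrightarrow> a = b \<Longrightarrow> rf_eval M xs b" by simp

lemma sucR: "rf_eval g xs a \<Longrightarrow> rf_eval (Comp Succ [g]) xs (Suc a)"
  by (rule c1) (auto intro: rf_eval.succ)

fun cn :: "nat \<Rightarrow> recf" where
  "cn 0 = Zero" | "cn (Suc k) = Comp Succ [cn k]"
lemma cnR: "rf_eval (cn k) xs k"
  by (induction k) (auto intro: rf_eval.zero sucR)

definition "addR = Prim (Proj 0) (Comp Succ [Proj 0])"
lemma addR0: "rf_eval addR [n, m] (n + m)"
proof (induction n)
  case 0 then show ?case unfolding addR_def by (auto intro: rf_eval.prim0 pj0)
next
  case (Suc n) then show ?case unfolding addR_def
    by (auto intro!: rf_eval.primS sucR pj0)
qed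
lemma addR: "rf_eval g1 xs a \<Longrightarrow> rf_eval g2 xs b \<Longrightarrow> rf_eval (Comp addR [g1,g2]) xs (a+b)"
  by (rule c2, assumption+, rule addR0)

definition "mulR = Prim Zero (Comp addR [Proj 0, Proj 2])"
lemma mulR0: "rf_eval mulR [n, m] (n * m)"
proof (induction n)
  case 0 then show ?case unfolding mulR_def by (auto intro: rf_eval.prim0 rf_eval.zero)
next
  case (Suc n) then show ?case unfolding mulR_def
    by (intro rf_eval.primS[where y="n*m"] ev_eq[OF addR[OF pj0 pj2]]) auto
qed
lemma mulR: "rf_eval g1 xs a \<Longrightarrow> rf_eval g2 xs b \<Longrightarrow> rf_eval (Comp mulR [g1,g2]) xs (a*b)"
  by (rule c2, assumption+, rule mulR0)

definition "predR = Prim Zero (Proj 1)"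
lemma predR0: "rf_eval predR [n] (n - 1)"
proof (induction n)
  case 0 then show ?case unfolding predR_def by (auto intro: rf_eval.prim0 rf_eval.zero)
next
  case (Suc k) then show ?case unfolding predR_def
    by (auto intro!: rf_eval.primS pjI)
qed

definition "subR = Prim (Proj 0) (Comp predR [Proj 0])"
lemma subR0: "rf_eval subR [n, m] (m - n)"
proof (induction n)
  case 0 then show ?case unfolding subR_def by (auto intro: rf_eval.prim0 pj0)
next
  case (Suc n) then show ?case unfolding subR_def
    by (intro rf_eval.primS[where y="m-n"] ev_eq[OF c1[OF pj0 predR0]]) auto
qed
lemma subR: "rf_eval g1 xs a \<Longrightarrow> rf_eval g2 xs b \<Longrightarrow> rf_eval (Comp subR [g1,g2]) xs (b - a)"
  by (rule c2, assumption+, rule subR0)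

definition "triR = Prim Zero (Comp addR [Proj 0, Comp Succ [Proj 1]])"
lemma triR0: "rf_eval triR [n] (triangle n)"
proof (induction n)
  case 0 then show ?case unfolding triR_def by (auto intro: rf_eval.prim0 rf_eval.zero)
next
  case (Suc n) then show ?case unfolding triR_def
    by (intro rf_eval.primS[where y="triangle n"] ev_eq[OF addR[OF pj0 sucR[OF pj1]]]) auto
qed
lemma triR: "rf_eval g xs a \<Longrightarrow> rf_eval (Comp triR [g]) xs (triangle a)"
  by (rule c1, assumption, rule triR0)

definition "peR = Comp addR [Comp triR [Comp addR [Proj 0, Proj 1]], Proj 0]"
lemma peR: "rf_eval g1 xs a \<Longrightarrow> rf_eval g2 xs b \<Longrightarrow> rf_eval (Comp peR [g1,g2]) xs (prod_encode (a,b))"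
  by (rule c2, assumption+) (auto simp: peR_def prod_encode_def intro!: addR triR pjI)

lemma tri_mono: "m \<le> n \<Longrightarrow> triangle m \<le> triangle n"
  by (induction n rule: dec_induct) auto

definition "sR = Mini (Comp subR [Comp triR [Comp Succ [Proj 0]], Comp Succ [Proj 1]])"

lemma sR0: "rf_eval sR [z] (fst (prod_decode z) + snd (prod_decode z))"
proof -
  obtain a b where ab: "prod_decode z = (a, b)" by (rule prod.exhaust)
  have z0: "z = prod_encode (a, b)" by (metis ab prod_decode_inverse)
  have z: "z = triangle (a+b) + a" unfolding z0 by (simp add: prod_encode_def)
  have f: "rf_eval (Comp subR [Comp triR [Comp Succ [Proj 0]], Comp Succ [Proj 1]]) [s, z] (Suc z - triangle (Suc s))" for s
    by (rule subR[OF triR[OF sucR[OF pj0]] sucR[OF pj1]])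
  have lt: "triangle (Suc m) \<le> triangle (a+b)" if "m < a + b" for m
    by (rule tri_mono) (use that in simp)
  show ?thesis unfolding sR_def ab fst_conv snd_conv
  proof (rule rf_eval.mini)
    show "rf_eval (Comp subR [Comp triR [Comp Succ [Proj 0]], Comp Succ [Proj 1]]) [a + b, z] 0"
      using f[of "a+b"] z by simp
    show "\<forall>m<a + b. \<exists>y. rf_eval (Comp subR [Comp triR [Comp Succ [Proj 0]], Comp Succ [Proj 1]]) (m # [z]) (Suc y)"
    proof (intro allI impI)
      fix m assume "m < a + b"
      then have e: "Suc z - triangle (Suc m) = Suc (z - triangle (Suc m))" using lt[of m] z by simp
      show "\<exists>y. rf_eval (Comp subR [Comp triR [Comp Succ [Proj 0]], Comp Succ [Proj 1]]) (m # [z]) (Suc y)"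
        using f[of m] unfolding e by (rule exI)
    qed
  qed
qed

definition "fstR = Comp subR [Comp triR [sR], Proj 0]"
definition "sndR = Comp subR [fstR, sR]"

lemma fstR0: "rf_eval fstR [z] (fst (prod_decode z))"
proof -
  obtain a b where ab: "prod_decode z = (a, b)" by (rule prod.exhaust)
  have z0: "z = prod_encode (a, b)" by (metis ab prod_decode_inverse)
  have z: "z = triangle (a+b) + a" unfolding z0 by (simp add: prod_encode_def)
  show ?thesis unfolding fstR_def
    by (rule ev_eq[OF subR[OF triR[OF sR0] pj0]]) (simp add: ab, simp add: z)
qed
lemma sndR0: "rf_eval sndR [z] (snd (prod_decode z))"
proof -
  obtain a b where ab: "prod_decode z = (a, b)" by (rule prod.exhaust)
  show ?thesis unfolding sndR_def
    by (rule ev_eq[OF subR[OF fstR0 sR0]]) (simp add: ab)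
qed
lemma fstR: "rf_eval g xs a \<Longrightarrow> rf_eval (Comp fstR [g]) xs (fst (prod_decode a))"
  by (rule c1, assumption, rule fstR0)
lemma sndR: "rf_eval g xs a \<Longrightarrow> rf_eval (Comp sndR [g]) xs (snd (prod_decode a))"
  by (rule c1, assumption, rule sndR0)

definition "condR = Comp addR [Comp mulR [Proj 1, Comp subR [Proj 0, cn 1]],
    Comp mulR [Proj 2, Comp subR [Comp subR [Proj 0, cn 1], cn 1]]]"
lemma condR0: "rf_eval condR [c, a, b] (if c = 0 then a else b)"
proof -
  have "rf_eval condR [c, a, b] (a * (1 - c) + b * (1 - (1 - c)))"
    unfolding condR_def by (rule addR[OF mulR[OF pj1 subR[OF pj0 cnR]] mulR[OF pj2 subR[OF subR[OF pj0 cnR] cnR]]])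
  moreover have "a * (1 - c) + b * (1 - (1 - c)) = (if c = 0 then a else b)" by auto
  ultimately show ?thesis by simp
qed
lemma condR: "rf_eval g1 xs c \<Longrightarrow> rf_eval g2 xs a \<Longrightarrow> rf_eval g3 xs b \<Longrightarrow>
   rf_eval (Comp condR [g1,g2,g3]) xs (if c = 0 then a else b)"
  by (rule c3, assumption+, rule condR0)



definition tlc :: "nat \<Rightarrow> nat" where "tlc z = snd (prod_decode (z - 1))"
definition hdc :: "nat \<Rightarrow> nat" where "hdc z = fst (prod_decode (z - 1))"

lemma tlc_code: "tlc (list_encode l) = list_encode (tl l)"
proof (cases l)
  case Nil
  have "prod_decode 0 = (0, 0)" using prod_encode_inverse[of "(0,0)"] by (simp add: prod_encode_def)
  then show ?thesis using Nil by (simp add: tlc_def)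
qed (simp add: tlc_def)

lemma hdc_Suc[simp]: "hdc (Suc (prod_encode (a, b))) = a" by (simp add: hdc_def)
lemma tlc_Suc[simp]: "tlc (Suc (prod_encode (a, b))) = b" by (simp add: tlc_def)

lemma hdc_code: "hdc (list_encode (c # l)) = c"
  by (simp add: hdc_def)

lemma iter_tlc: "(tlc ^^ k) (list_encode x) = list_encode (drop k x)"
  by (induction k) (auto simp: tlc_code drop_Suc drop_tl)

definition "tlR = Comp sndR [Comp predR [Proj 0]]"
definition "hdR = Comp fstR [Comp predR [Proj 0]]"
lemma tlR: "rf_eval g xs a \<Longrightarrow> rf_eval (Comp tlR [g]) xs (tlc a)"
  by (rule c1, assumption) (unfold tlR_def tlc_def, rule sndR[OF c1[OF pj0 predR0]])
lemma hdR: "rf_eval g xs a \<Longrightarrow> rf_eval (Comp hdR [g]) xs (hdc a)"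
  by (rule c1, assumption) (unfold hdR_def hdc_def, rule fstR[OF c1[OF pj0 predR0]])

definition "iterR = Prim (Proj 0) (Comp tlR [Proj 0])"
lemma iterR0: "rf_eval iterR [k, z] ((tlc ^^ k) z)"
proof (induction k)
  case 0 then show ?case unfolding iterR_def by (auto intro: rf_eval.prim0 pj0)
next
  case (Suc k) then show ?case unfolding iterR_def
    by (intro rf_eval.primS[where y="(tlc ^^ k) z"] ev_eq[OF tlR[OF pj0]]) auto
qed
lemma iterR: "rf_eval g1 xs a \<Longrightarrow> rf_eval g2 xs b \<Longrightarrow> rf_eval (Comp iterR [g1,g2]) xs ((tlc ^^ a) b)"
  by (rule c2, assumption+, rule iterR0)

definition enc3 :: "nat \<times> nat \<times> nat \<Rightarrow> nat" where
  "enc3 = (\<lambda>(p, a, q). prod_encode (p, prod_encode (a, q)))"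

definition tail3 :: "nat \<Rightarrow> (nat \<times> nat \<times> nat) list" where
  "tail3 n = [(1, 2*n, 0), (0, 2*n, 0)]"

definition init :: "nat \<Rightarrow> nat \<Rightarrow> nat" where
  "init n lx = Suc (prod_encode (enc3 (lx+1, 2*n+1, lx+1), list_encode (map enc3 (tail3 n))))"

primrec accH :: "nat \<Rightarrow> nat \<Rightarrow> nat \<Rightarrow> nat" where
  "accH n 0 lx = init n lx"
| "accH n (Suc k) lx = (if (tlc ^^ k) lx = 0 then accH n k lx else
     Suc (prod_encode (enc3 ((tlc ^^ k) lx + 1, hdc ((tlc ^^ k) lx), tlc ((tlc ^^ k) lx) + 1), accH n k lx)))"

definition initR :: "nat \<Rightarrow> recf" where
  "initR n = Comp Succ [Comp peR [Comp peR [Comp Succ [Proj 0], Comp peR [cn (2*n+1), Comp Succ [Proj 0]]],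
     cn (list_encode (map enc3 (tail3 n)))]]"

definition curR :: recf where "curR = Comp iterR [Proj 1, Proj 2]"

definition stepR :: recf where
  "stepR = Comp condR [curR, Proj 0, Comp Succ [Comp peR [Comp peR [Comp Succ [curR],
      Comp peR [Comp hdR [curR], Comp Succ [Comp tlR [curR]]]], Proj 0]]]"

definition accR :: "nat \<Rightarrow> recf" where "accR n = Prim (initR n) stepR"

lemma accR0: "rf_eval (accR n) [k, lx] (accH n k lx)"
proof (induction k)
  case 0
  have "rf_eval (initR n) [lx] (init n lx)"
    unfolding initR_def init_def enc3_def
    by (rule ev_eq[OF sucR[OF peR[OF peR[OF sucR[OF pj0] peR[OF cnR sucR[OF pj0]]] cnR]]]) simp
  then show ?case unfolding accR_def by (auto intro: rf_eval.prim0)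
next
  case (Suc k)
  have cur: "rf_eval curR [y, k, lx] ((tlc ^^ k) lx)" for y
    unfolding curR_def by (rule iterR[OF pj1 pj2])
  have "rf_eval stepR [accH n k lx, k, lx] (accH n (Suc k) lx)"
    unfolding stepR_def accH.simps enc3_def
    by (rule ev_eq[OF condR[OF cur pj0 sucR[OF peR[OF peR[OF sucR[OF cur] peR[OF hdR[OF cur] sucR[OF tlR[OF cur]]]] pj0]]]]) simp
  with Suc show ?case unfolding accR_def by (auto intro: rf_eval.primS)
qed

definition sufftrans :: "nat list \<Rightarrow> (nat \<times> nat \<times> nat) list" where
  "sufftrans x = map (\<lambda>k. (list_encode (drop k x) + 1, x ! k, list_encode (drop (Suc k) x) + 1)) [0..<length x]"

definition tsA :: "nat \<Rightarrow> nat list \<Rightarrow> (nat \<times> nat \<times> nat) list" where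
  "tsA n x = rev (sufftrans x) @ (list_encode x + 1, 2*n+1, list_encode x + 1) # tail3 n"

definition autA :: "nat \<Rightarrow> nat list \<Rightarrow> nfa" where
  "autA n x = (tsA n x, list_encode x + 1, [1, 0])"

lemma accH_val: "accH n k (list_encode x) =
   list_encode (map enc3 (rev (take k (sufftrans x)) @ (list_encode x + 1, 2*n+1, list_encode x + 1) # tail3 n))"
proof (induction k)
  case 0 then show ?case by (simp add: init_def)
next
  case (Suc k)
  show ?case
  proof (cases "k < length x")
    case True
    have d: "drop k x = x ! k # drop (Suc k) x" using True by (simp add: Cons_nth_drop_Suc)
    have t: "take (Suc k) (sufftrans x) = take k (sufftrans x) @ [sufftrans x ! k]"
      using True by (simp add: take_Suc_conv_app_nth sufftrans_def)
    have "(tlc ^^ k) (list_encode x) \<noteq> 0" using d by (simp add: iter_tlc)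
    then show ?thesis using Suc d t True
      by (simp add: iter_tlc tlc_code hdc_code sufftrans_def)
  next
    case False
    then have "(tlc ^^ k) (list_encode x) = 0" by (simp add: iter_tlc)
    moreover have "take (Suc k) (sufftrans x) = take k (sufftrans x)" using False by (simp add: sufftrans_def)
    ultimately show ?thesis using Suc by simp
  qed
qed

lemma len_le_code: "length x \<le> list_encode x"
proof (induction x)
  case (Cons a x) then show ?case using le_prod_encode_2[of "list_encode x" a] by simp
qed simp

lemma enc_autA: "enc_nfa (autA n x) =
   prod_encode (accH n (list_encode x) (list_encode x), prod_encode (list_encode x + 1, list_encode [1, 0]))"
proof -
  have "length (sufftrans x) \<le> list_encode x" using len_le_code[of x] by (simp add: sufftrans_def)
  then have "take (list_encode x) (sufftrans x) = sufftrans x" by simp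
  then show ?thesis unfolding accH_val autA_def tsA_def enc_nfa.simps enc3_def by simp
qed



lemma nfa_run_app: "nfa_run ts p (u @ v) q \<longleftrightarrow> (\<exists>m. nfa_run ts p u m \<and> nfa_run ts m v q)"
  by (induction u arbitrary: p) auto

lemma run_letters: "nfa_run ts p v q \<Longrightarrow> \<forall>(p, a, q) \<in> set ts. a < B \<Longrightarrow> \<forall>c \<in> set v. c < B"
  by (induction v arbitrary: p) fastforce+

lemma code0: "list_encode l = 0 \<longleftrightarrow> l = []"
  by (cases l) auto

lemma S_inj: "k \<le> length x \<Longrightarrow> k' \<le> length x \<Longrightarrow> list_encode (drop k x) = list_encode (drop k' x) \<Longrightarrow> k = k'"
proof -
  assume a: "k \<le> length x" "k' \<le> length x" "list_encode (drop k x) = list_encode (drop k' x)"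
  then have "drop k x = drop k' x" by (simp add: list_encode_eq)
  then have "length (drop k x) = length (drop k' x)" by simp
  with a show ?thesis by simp
qed

lemma mem_tsA: "(p, a, q) \<in> set (tsA n x) \<longleftrightarrow>
   (p = list_encode x + 1 \<and> a = 2*n+1 \<and> q = list_encode x + 1) \<or> (p = 1 \<and> a = 2*n \<and> q = 0) \<or>
   (p = 0 \<and> a = 2*n \<and> q = 0) \<or>
   (\<exists>k<length x. p = list_encode (drop k x) + 1 \<and> a = x ! k \<and> q = list_encode (drop (Suc k) x) + 1)"
  by (auto simp: tsA_def tail3_def sufftrans_def)

lemma run0: "nfa_run (tsA n x) 0 w q \<Longrightarrow> q = 0 \<and> w = replicate (length w) (2*n)"
proof (induction w)
  case Nil then show ?case by simp
next
  case (Cons a w)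
  then obtain p' where t: "(0, a, p') \<in> set (tsA n x)" and r: "nfa_run (tsA n x) p' w q" by auto
  from t have "a = 2*n \<and> p' = 0" unfolding mem_tsA by auto
  with Cons.IH r show ?case by simp
qed

lemma runR: "0 < k \<Longrightarrow> k \<le> length x \<Longrightarrow> nfa_run (tsA n x) (list_encode (drop k x) + 1) w q \<Longrightarrow>
   q = 0 \<or> q = 1 \<Longrightarrow> \<exists>j. w = drop k x @ replicate j (2*n)"
proof (induction w arbitrary: k)
  case Nil
  then have "list_encode (drop k x) = 0" by auto
  then show ?case by (simp add: code0)
next
  case (Cons a w)
  then obtain p' where t: "(list_encode (drop k x) + 1, a, p') \<in> set (tsA n x)"
    and r: "nfa_run (tsA n x) p' w q" by auto
  from t[unfolded mem_tsA] show ?case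
  proof (elim disjE exE conjE)
    assume "list_encode (drop k x) + 1 = list_encode x + 1"
    then have "k = 0" using S_inj[of k x 0] Cons.prems by simp
    with Cons.prems show ?case by simp
  next
    assume "list_encode (drop k x) + 1 = 1" "a = 2 * n" "p' = 0"
    then have "drop k x = []" by (simp add: code0)
    moreover have "w = replicate (length w) (2*n)" using run0 r \<open>p' = 0\<close> by blast
    ultimately show ?case using \<open>a = 2*n\<close> by (metis append_Nil replicate_Suc)
  next
    assume "list_encode (drop k x) + 1 = 0" then show ?case by simp
  next
    fix k' assume k': "k' < length x" "list_encode (drop k x) + 1 = list_encode (drop k' x) + 1"
      "a = x ! k'" "p' = list_encode (drop (Suc k') x) + 1"
    then have "k = k'" using S_inj[of k x k'] Cons.prems by simp
    then obtain j where "w = drop (Suc k) x @ replicate j (2*n)"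
      using Cons.IH[of "Suc k"] k' r Cons.prems by auto
    moreover have e: "drop k x = x ! k # drop (Suc k) x" using k' \<open>k = k'\<close> by (simp add: Cons_nth_drop_Suc)
    ultimately show ?case using k' \<open>k = k'\<close> by (intro exI[of _ j]) simp
  qed
qed

lemma runL: "nfa_run (tsA n x) (list_encode x + 1) w q \<Longrightarrow>
   q = 0 \<or> q = 1 \<Longrightarrow> \<exists>i j. w = replicate i (2*n+1) @ x @ replicate j (2*n)"
proof (induction w)
  case Nil
  then have "list_encode x = 0" by auto
  then show ?case by (simp add: code0)
next
  case (Cons a w)
  then obtain p' where t: "(list_encode x + 1, a, p') \<in> set (tsA n x)"
    and r: "nfa_run (tsA n x) p' w q" by auto
  from t[unfolded mem_tsA] show ?case
  proof (elim disjE exE conjE)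
    assume "a = 2 * n + 1" "p' = list_encode x + 1"
    then obtain i j where "w = replicate i (2*n+1) @ x @ replicate j (2*n)" using Cons r by auto
    then have "a # w = replicate (Suc i) (2*n+1) @ x @ replicate j (2*n)" using \<open>a = 2*n+1\<close> by simp
    then show ?case by blast
  next
    assume "list_encode x + 1 = 1" "a = 2 * n" "p' = 0"
    then have "x = []" by (simp add: code0)
    moreover have "w = replicate (length w) (2*n)" using run0 r \<open>p' = 0\<close> by blast
    ultimately have "a # w = replicate 0 (2*n+1) @ x @ replicate (Suc (length w)) (2*n)"
      using \<open>a = 2*n\<close> by (metis append_Nil replicate_Suc replicate_0)
    then show ?case by blast
  next
    assume "list_encode x + 1 = 0" then show ?case by simp
  next
    fix k' assume k': "k' < length x" "list_encode x + 1 = list_encode (drop k' x) + 1"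
      "a = x ! k'" "p' = list_encode (drop (Suc k') x) + 1"
    then have "k' = 0" using S_inj[of 0 x k'] by simp
    then obtain j where "w = drop 1 x @ replicate j (2*n)"
      using runR[of 1 x n w q] k' r Cons.prems by auto
    then have "a # w = replicate 0 (2*n+1) @ x @ replicate j (2*n)"
      using k' \<open>k' = 0\<close> Cons_nth_drop_Suc[of 0 x] by auto
    then show ?case by blast
  qed
qed

lemma run_suff: "m + k = length x \<Longrightarrow> nfa_run (tsA n x) (list_encode (drop k x) + 1) (drop k x) 1"
proof (induction m arbitrary: k)
  case 0 then show ?case by simp
next
  case (Suc m)
  then have k: "k < length x" by simp
  have d: "drop k x = x ! k # drop (Suc k) x" using k by (simp add: Cons_nth_drop_Suc)
  have "(list_encode (drop k x) + 1, x ! k, list_encode (drop (Suc k) x) + 1) \<in> set (tsA n x)"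
    unfolding mem_tsA using k by blast
  moreover have "nfa_run (tsA n x) (list_encode (drop (Suc k) x) + 1) (drop (Suc k) x) 1"
    using Suc by simp
  ultimately show ?case by (subst d) auto
qed

lemma run_loopL: "nfa_run (tsA n x) (list_encode x + 1) w q \<Longrightarrow>
   nfa_run (tsA n x) (list_encode x + 1) (replicate i (2*n+1) @ w) q"
proof (induction i)
  case (Suc i)
  have "(list_encode x + 1, 2*n+1, list_encode x + 1) \<in> set (tsA n x)" unfolding mem_tsA by simp
  with Suc show ?case by auto
qed simp

lemma run_t0: "nfa_run (tsA n x) 0 (replicate j (2*n)) 0"
proof (induction j)
  case (Suc j)
  have "(0, 2*n, 0) \<in> set (tsA n x)" unfolding mem_tsA by simp
  with Suc show ?case by auto
qed simp

lemma accA: "nfa_accepts (autA n x) (replicate i (2*n+1) @ x @ replicate j (2*n))"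
proof -
  have r1: "nfa_run (tsA n x) (list_encode x + 1) x 1"
    using run_suff[of "length x" 0 x n] by simp
  have r2: "\<exists>q\<in>set [1,0]. nfa_run (tsA n x) 1 (replicate j (2*n)) q"
  proof (cases j)
    case 0 then show ?thesis by simp
  next
    case (Suc j')
    have "(1, 2*n, 0) \<in> set (tsA n x)" unfolding mem_tsA by simp
    then have "nfa_run (tsA n x) 1 (replicate j (2*n)) 0" using Suc run_t0[of n x j'] by auto
    then show ?thesis by simp
  qed
  then obtain q where "q \<in> set [1,0]" "nfa_run (tsA n x) 1 (replicate j (2*n)) q" by blast
  then have "nfa_run (tsA n x) (list_encode x + 1) (x @ replicate j (2*n)) q"
    using r1 nfa_run_app by blast
  then have "nfa_run (tsA n x) (list_encode x + 1) (replicate i (2*n+1) @ x @ replicate j (2*n)) q"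
    by (rule run_loopL)
  with \<open>q \<in> set [1,0]\<close> show ?thesis unfolding autA_def by auto
qed

lemma accA_inv: "nfa_accepts (autA n x) w \<Longrightarrow> \<exists>i j. w = replicate i (2*n+1) @ x @ replicate j (2*n)"
  unfolding autA_def using runL by auto



lemma sd_letter_G: "c < 2 * length gens \<Longrightarrow> sd_letter G gens c = (gen_letter G gens c, 0)"
proof -
  assume "c < 2 * length gens"
  then have "c div 2 \<noteq> length gens" by linarith
  then show ?thesis by (simp add: sd_letter_def)
qed

lemma sd_eval_Cons: "sd_eval G \<phi> gens (c # w) = sd_mult G \<phi> (sd_letter G gens c) (sd_eval G \<phi> gens w)"
  by (simp add: sd_eval_def)
lemma eval_word_Cons: "eval_word G gens (c # w) = gen_letter G gens c \<otimes>\<^bsub>G\<^esub> eval_word G gens w"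
  by (simp add: eval_word_def)
lemma aut_pow_0: "aut_pow G \<phi> 0 = id" by (simp add: aut_pow_def)
lemma aut_pow_1: "aut_pow G \<phi> 1 = \<phi>" by (simp add: aut_pow_def)
lemma aut_pow_m1: "aut_pow G \<phi> (-1) = inv_into (carrier G) \<phi>" by (simp add: aut_pow_def)

lemma sd_eval_Gword: "word_ok (length gens) v \<Longrightarrow> sd_eval G \<phi> gens w = (\<one>\<^bsub>G\<^esub>, m) \<Longrightarrow>
   sd_eval G \<phi> gens (v @ w) = (eval_word G gens v, m)"
proof (induction v)
  case Nil then show ?case by (simp add: eval_word_def)
next
  case (Cons c v)
  then have c: "c < 2 * length gens" and v: "word_ok (length gens) v" by (auto simp: word_ok_def)
  have "sd_eval G \<phi> gens ((c # v) @ w) = sd_mult G \<phi> (sd_letter G gens c) (sd_eval G \<phi> gens (v @ w))"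
    by (simp add: sd_eval_Cons)
  also have "\<dots> = (gen_letter G gens c \<otimes>\<^bsub>G\<^esub> eval_word G gens v, m)"
    unfolding Cons.IH[OF v Cons.prems(2)] sd_letter_G[OF c] sd_mult_def by (simp add: aut_pow_0)
  also have "\<dots> = (eval_word G gens (c # v), m)" by (simp add: eval_word_Cons)
  finally show ?case .
qed

lemma sd_eval_Gword0: "word_ok (length gens) v \<Longrightarrow> sd_eval G \<phi> gens v = (eval_word G gens v, 0)"
  using sd_eval_Gword[of gens v G \<phi> "[]" 0] by (simp add: sd_eval_def)

lemma sd_eval_t:
  assumes "group G" "inv_into (carrier G) \<phi> \<one>\<^bsub>G\<^esub> = \<one>\<^bsub>G\<^esub>"
  shows "sd_eval G \<phi> gens (replicate j (2 * length gens)) = (\<one>\<^bsub>G\<^esub>, int j)"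
proof (induction j)
  case 0 then show ?case by (simp add: sd_eval_def)
next
  case (Suc j)
  interpret group G by fact
  have l: "sd_letter G gens (2 * length gens) = (\<one>\<^bsub>G\<^esub>, 1)" by (simp add: sd_letter_def)
  have "sd_eval G \<phi> gens (replicate (Suc j) (2 * length gens)) =
     sd_mult G \<phi> (sd_letter G gens (2 * length gens)) (sd_eval G \<phi> gens (replicate j (2 * length gens)))"
    by (simp add: sd_eval_Cons)
  also have "\<dots> = (\<one>\<^bsub>G\<^esub> \<otimes>\<^bsub>G\<^esub> inv_into (carrier G) \<phi> \<one>\<^bsub>G\<^esub>, 1 + int j)"
    unfolding Suc.IH l sd_mult_def by (simp add: aut_pow_m1)
  also have "\<dots> = (\<one>\<^bsub>G\<^esub>, int (Suc j))" using assms(2) by simp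
  finally show ?case .
qed

lemma funpow_carrier: "\<phi> \<in> carrier G \<rightarrow> carrier G \<Longrightarrow> g \<in> carrier G \<Longrightarrow> (\<phi> ^^ i) g \<in> carrier G"
  by (induction i) auto

lemma sd_eval_tinv:
  assumes "group G" "\<phi> \<in> carrier G \<rightarrow> carrier G" "g \<in> carrier G" "sd_eval G \<phi> gens w = (g, m)"
  shows "sd_eval G \<phi> gens (replicate i (2 * length gens + 1) @ w) = ((\<phi> ^^ i) g, m - int i)"
proof (induction i)
  case 0 then show ?case using assms by simp
next
  case (Suc i)
  interpret group G by fact
  have l: "sd_letter G gens (2 * length gens + 1) = (\<one>\<^bsub>G\<^esub>, -1)" by (simp add: sd_letter_def)
  have gi: "\<phi> ((\<phi> ^^ i) g) \<in> carrier G"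
    using funpow_carrier[OF assms(2,3), of i] assms(2) by auto
  have "sd_eval G \<phi> gens (replicate (Suc i) (2 * length gens + 1) @ w) =
     sd_mult G \<phi> (sd_letter G gens (2 * length gens + 1)) (sd_eval G \<phi> gens (replicate i (2 * length gens + 1) @ w))"
    by (simp add: sd_eval_Cons)
  also have "\<dots> = (\<one>\<^bsub>G\<^esub> \<otimes>\<^bsub>G\<^esub> \<phi> ((\<phi> ^^ i) g), -1 + (m - int i))"
    unfolding Suc.IH l sd_mult_def by (simp add: aut_pow_1)
  also have "\<dots> = ((\<phi> ^^ Suc i) g, m - int (Suc i))" using gi by simp
  finally show ?case .
qed

lemma gen_letter_carrier: "group G \<Longrightarrow> set gens \<subseteq> carrier G \<Longrightarrow> c < 2 * length gens \<Longrightarrow>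
   gen_letter G gens c \<in> carrier G"
proof -
  assume a: "group G" "set gens \<subseteq> carrier G" "c < 2 * length gens"
  interpret group G by fact
  have "c div 2 < length gens" using a(3) by linarith
  then have "gens ! (c div 2) \<in> carrier G" using nth_mem[of "c div 2" gens] a(2) by blast
  then show ?thesis by (simp add: gen_letter_def)
qed

lemma eval_word_carrier: "group G \<Longrightarrow> set gens \<subseteq> carrier G \<Longrightarrow> word_ok (length gens) v \<Longrightarrow>
   eval_word G gens v \<in> carrier G"
proof (induction v)
  case Nil
  interpret group G by fact
  show ?case by (simp add: eval_word_def)
next
  case (Cons c v)
  interpret group G by fact
  have "c < 2 * length gens" "word_ok (length gens) v" using Cons.prems by (auto simp: word_ok_def)
  then show ?case using Cons gen_letter_carrier[of G gens c] by (simp add: eval_word_Cons)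
qed



lemma key:
  assumes G: "group G" and gs: "set gens \<subseteq> carrier G" and iso: "\<phi> \<in> iso G G"
    and Kok: "nfa_ok (length gens) K" and xok: "word_ok (length gens) x"
  shows "(sd_rat_set G \<phi> gens (autA (length gens) x) \<inter> sd_rat_set G \<phi> gens K \<noteq> {}) \<longleftrightarrow>
    (\<exists>k::nat. (\<phi> ^^ k) (eval_word G gens x) \<in> rat_set G gens K)"
proof -
  interpret group G by fact
  have hom: "\<phi> \<in> hom G G" and inj: "inj_on \<phi> (carrier G)" using iso by (auto simp: iso_iff)
  have fc: "\<phi> \<in> carrier G \<rightarrow> carrier G" using hom by (simp add: hom_def)
  have one: "inv_into (carrier G) \<phi> \<one>\<^bsub>G\<^esub> = \<one>\<^bsub>G\<^esub>"
    by (rule inv_into_f_eq[OF inj one_closed hom_one[OF hom G G]])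
  have xc: "eval_word G gens x \<in> carrier G" by (rule eval_word_carrier[OF G gs xok])
  have Aval: "sd_eval G \<phi> gens (replicate i (2 * length gens + 1) @ x @ replicate j (2 * length gens)) =
     ((\<phi> ^^ i) (eval_word G gens x), int j - int i)" for i j
  proof -
    have "sd_eval G \<phi> gens (x @ replicate j (2 * length gens)) = (eval_word G gens x, int j)"
      by (rule sd_eval_Gword[OF xok sd_eval_t[OF G one]])
    from sd_eval_tinv[OF G fc xc this] show ?thesis .
  qed
  have Kw: "word_ok (length gens) v" if "nfa_accepts K v" for v
  proof -
    obtain ts q0 fs where K: "K = (ts, q0, fs)" by (rule prod_cases3)
    from that K obtain q where "nfa_run ts q0 v q" by auto
    from run_letters[OF this] Kok K show ?thesis by (auto simp: word_ok_def)
  qed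
  show ?thesis
  proof
    assume "sd_rat_set G \<phi> gens (autA (length gens) x) \<inter> sd_rat_set G \<phi> gens K \<noteq> {}"
    then obtain e where e1: "e \<in> sd_rat_set G \<phi> gens (autA (length gens) x)" and e2: "e \<in> sd_rat_set G \<phi> gens K"
      by blast
    from e1 obtain w where w: "nfa_accepts (autA (length gens) x) w" and ew: "e = sd_eval G \<phi> gens w"
      unfolding sd_rat_set_def by blast
    from e2 obtain v where v: "nfa_accepts K v" and ev: "e = sd_eval G \<phi> gens v"
      unfolding sd_rat_set_def by blast
    from ew ev have e: "sd_eval G \<phi> gens w = sd_eval G \<phi> gens v" by simp
    from accA_inv[OF w] obtain i j where wij: "w = replicate i (2 * length gens + 1) @ x @ replicate j (2 * length gens)"
      by blast
    from e[unfolded wij Aval sd_eval_Gword0[OF Kw[OF v]]]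
    have "(\<phi> ^^ i) (eval_word G gens x) = eval_word G gens v" by simp
    then have "(\<phi> ^^ i) (eval_word G gens x) \<in> rat_set G gens K" using v unfolding rat_set_def by auto
    then show "\<exists>k::nat. (\<phi> ^^ k) (eval_word G gens x) \<in> rat_set G gens K" by blast
  next
    assume "\<exists>k::nat. (\<phi> ^^ k) (eval_word G gens x) \<in> rat_set G gens K"
    then obtain k v where v: "nfa_accepts K v" and e: "(\<phi> ^^ k) (eval_word G gens x) = eval_word G gens v"
      unfolding rat_set_def by auto
    let ?w = "replicate k (2 * length gens + 1) @ x @ replicate k (2 * length gens)"
    have "sd_eval G \<phi> gens ?w = sd_eval G \<phi> gens v"
      unfolding Aval sd_eval_Gword0[OF Kw[OF v]] e by simp
    moreover have "nfa_accepts (autA (length gens) x) ?w" by (rule accA[of "length gens" x k k])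
    ultimately have "sd_eval G \<phi> gens v \<in> sd_rat_set G \<phi> gens (autA (length gens) x)"
      unfolding sd_rat_set_def by (intro image_eqI[of _ _ ?w]) auto
    moreover have "sd_eval G \<phi> gens v \<in> sd_rat_set G \<phi> gens K"
      using v unfolding sd_rat_set_def by blast
    ultimately show "sd_rat_set G \<phi> gens (autA (length gens) x) \<inter> sd_rat_set G \<phi> gens K \<noteq> {}" by blast
  qed
qed

lemma autA_ok: "word_ok n x \<Longrightarrow> nfa_ok (Suc n) (autA n x)"
  unfolding autA_def nfa_ok.simps
proof (intro ballI, clarify)
  fix p a q assume w: "word_ok n x" and m: "(p, a, q) \<in> set (tsA n x)"
  have "\<forall>k<length x. x ! k < 2 * n" using w by (auto simp: word_ok_def)
  with m show "a < 2 * Suc n" unfolding mem_tsA by auto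
qed

lemma K_ok: "nfa_ok n K \<Longrightarrow> nfa_ok (Suc n) K"
  by (cases K) fastforce

definition "lxR = Comp sndR [Comp sndR [Proj 0]]"
definition "MM n = Comp peR [Comp fstR [Comp sndR [Proj 0]],
   Comp peR [Comp peR [Comp (accR n) [lxR, lxR], Comp peR [Comp Succ [lxR], cn (list_encode [1, 0])]],
             Comp fstR [Proj 0]]]"

lemma MM: "rf_eval (MM n) [prod_encode (enc_nfa K, prod_encode (enc_aut ws, list_encode x))]
   (prod_encode (enc_aut ws, prod_encode (enc_nfa (autA n x), enc_nfa K)))"
proof -
  let ?z = "prod_encode (enc_nfa K, prod_encode (enc_aut ws, list_encode x))"
  have l: "rf_eval lxR [?z] (list_encode x)"
    unfolding lxR_def by (rule ev_eq[OF sndR[OF sndR[OF pj0]]]) simp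
  show ?thesis unfolding MM_def enc_autA
    by (rule ev_eq[OF peR[OF fstR[OF sndR[OF pj0]] peR[OF peR[OF c2[OF l l accR0] peR[OF sucR[OF l] cnR]] fstR[OF pj0]]]]) simp
qed

theorem proposition5p2:
  fixes G :: "('a, 'b) monoid_scheme" and gens :: "'a list"
  assumes "group G"
    and "set gens \<subseteq> carrier G"
    and "generate G (set gens) = carrier G"
    and "IP_Rat_sd_decidable G gens"
  shows "GBrP_Rat_decidable G gens"
proof -
  from assms(4) obtain M where M: "\<forall>\<phi> ws A B.
     represents G gens ws \<phi> \<and> nfa_ok (Suc (length gens)) A \<and> nfa_ok (Suc (length gens)) B \<longrightarrow>
     rf_eval M [prod_encode (enc_aut ws, prod_encode (enc_nfa A, enc_nfa B))]
       (if sd_rat_set G \<phi> gens A \<inter> sd_rat_set G \<phi> gens B \<noteq> {} then 1 else 0)"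
    unfolding IP_Rat_sd_decidable_def by blast
  show ?thesis unfolding GBrP_Rat_decidable_def
  proof (intro exI[of _ "Comp M [MM (length gens)]"] allI impI, elim conjE)
    fix K \<phi> ws x
    assume K: "nfa_ok (length gens) K" and r: "represents G gens ws \<phi>" and x: "word_ok (length gens) x"
    have "rf_eval M [prod_encode (enc_aut ws, prod_encode (enc_nfa (autA (length gens) x), enc_nfa K))]
       (if sd_rat_set G \<phi> gens (autA (length gens) x) \<inter> sd_rat_set G \<phi> gens K \<noteq> {} then 1 else 0)"
      using M r autA_ok[OF x] K_ok[OF K] by blast
    moreover have "\<phi> \<in> iso G G" using r by (simp add: represents_def)
    ultimately have "rf_eval M [prod_encode (enc_aut ws, prod_encode (enc_nfa (autA (length gens) x), enc_nfa K))]
       (if \<exists>k::nat. (\<phi> ^^ k) (eval_word G gens x) \<in> rat_set G gens K then 1 else 0)"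
      using key[OF assms(1,2) _ K x] by simp
    then show "rf_eval (Comp M [MM (length gens)]) [prod_encode (enc_nfa K, prod_encode (enc_aut ws, list_encode x))]
       (if \<exists>k::nat. (\<phi> ^^ k) (eval_word G gens x) \<in> rat_set G gens K then 1 else 0)"
      by (rule c1[OF MM])
  qed
qed

end
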